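(* Let $V$ be an $n$-dimensional vector space over a field $\mathbb{F}$ with an alternating bilinear form $\mathsf{s}$ of maximal rank. Then the symplectic group $\mathrm{Sp}(V)$ acts flag-transitively on $\Gamma(V)$.
   Context: $\mathrm{Sp}(V)$ is the group of linear automorphisms of $V$ preserving $\mathsf{s}$. $\mathrm{Rad}(U)=U\cap U^\perp$; maximal rank means $\dim\mathrm{Rad}(V)\le1$. $\Gamma(V)$: for $i\in I=\{1,\dots,n-1\}$ the objects of type $i$ are the $i$-dimensional subspaces $U$ with $U\cap\mathrm{Rad}(V)=0$ and $\dim\mathrm{Rad}(U)\le1$; $X,Y$ are incident iff $X=Y$, or $X\subseteq Y$ with $X\cap\mathrm{Rad}(Y)=0$, or vice versa. A flag is a set of pairwise incident objects, its type is the set of types of its members. Flag-transitive: for every $J\subseteq I$ the group is transitive on the set of flags of type $J$. *)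

theory Defs
  imports Complex_Main
begin

definition perp :: "('v \<Rightarrow> 'v \<Rightarrow> 'a::field) \<Rightarrow> 'v set \<Rightarrow> 'v set" where
  "perp s U = {v. \<forall>u\<in>U. s u v = 0}"

definition Rad :: "('v \<Rightarrow> 'v \<Rightarrow> 'a::field) \<Rightarrow> 'v set \<Rightarrow> 'v set" where
  "Rad s U = U \<inter> perp s U"

definition bilinear_form :: "('a::field \<Rightarrow> 'v::ab_group_add \<Rightarrow> 'v) \<Rightarrow> ('v \<Rightarrow> 'v \<Rightarrow> 'a) \<Rightarrow> bool" where
  "bilinear_form scale s \<longleftrightarrow>
     (\<forall>x. Vector_Spaces.linear scale (*) (s x)) \<and>
     (\<forall>y. Vector_Spaces.linear scale (*) (\<lambda>x. s x y))"

definition alternating :: "('v \<Rightarrow> 'v \<Rightarrow> 'a::field) \<Rightarrow> bool" where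
  "alternating s \<longleftrightarrow> (\<forall>x. s x x = 0)"

definition maximal_rank :: "('a::field \<Rightarrow> 'v::ab_group_add \<Rightarrow> 'v) \<Rightarrow> ('v \<Rightarrow> 'v \<Rightarrow> 'a) \<Rightarrow> bool" where
  "maximal_rank scale s \<longleftrightarrow> vector_space.dim scale (Rad s UNIV) \<le> 1"

definition Sp :: "('a::field \<Rightarrow> 'v::ab_group_add \<Rightarrow> 'v) \<Rightarrow> ('v \<Rightarrow> 'v \<Rightarrow> 'a) \<Rightarrow> ('v \<Rightarrow> 'v) set" where
  "Sp scale s = {g. Vector_Spaces.linear scale scale g \<and> bij g \<and> (\<forall>x y. s (g x) (g y) = s x y)}"

definition is_object :: "('a::field \<Rightarrow> 'v::ab_group_add \<Rightarrow> 'v) \<Rightarrow> ('v \<Rightarrow> 'v \<Rightarrow> 'a) \<Rightarrow> nat \<Rightarrow> 'v set \<Rightarrow> bool" where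
  "is_object scale s i U \<longleftrightarrow>
     i \<in> {1..vector_space.dim scale (UNIV::'v set) - 1} \<and>
     module.subspace scale U \<and> vector_space.dim scale U = i \<and>
     U \<inter> Rad s UNIV = {0} \<and> vector_space.dim scale (Rad s U) \<le> 1"

definition objects :: "('a::field \<Rightarrow> 'v::ab_group_add \<Rightarrow> 'v) \<Rightarrow> ('v \<Rightarrow> 'v \<Rightarrow> 'a) \<Rightarrow> 'v set set" where
  "objects scale s = {U. \<exists>i. is_object scale s i U}"

definition obj_type :: "('a::field \<Rightarrow> 'v::ab_group_add \<Rightarrow> 'v) \<Rightarrow> 'v set \<Rightarrow> nat" where
  "obj_type scale U = vector_space.dim scale U"

definition incident :: "('v::zero \<Rightarrow> 'v \<Rightarrow> 'a::field) \<Rightarrow> 'v set \<Rightarrow> 'v set \<Rightarrow> bool" where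
  "incident s X Y \<longleftrightarrow> X = Y \<or> (X \<subseteq> Y \<and> X \<inter> Rad s Y = {0}) \<or> (Y \<subseteq> X \<and> Y \<inter> Rad s X = {0})"

definition is_flag :: "('a::field \<Rightarrow> 'v::ab_group_add \<Rightarrow> 'v) \<Rightarrow> ('v \<Rightarrow> 'v \<Rightarrow> 'a) \<Rightarrow> 'v set set \<Rightarrow> bool" where
  "is_flag scale s F \<longleftrightarrow> F \<subseteq> objects scale s \<and> (\<forall>X\<in>F. \<forall>Y\<in>F. incident s X Y)"

definition flag_type :: "('a::field \<Rightarrow> 'v::ab_group_add \<Rightarrow> 'v) \<Rightarrow> 'v set set \<Rightarrow> nat set" where
  "flag_type scale F = obj_type scale ` F"

definition flag_transitive :: "('a::field \<Rightarrow> 'v::ab_group_add \<Rightarrow> 'v) \<Rightarrow> ('v \<Rightarrow> 'v \<Rightarrow> 'a) \<Rightarrow> ('v \<Rightarrow> 'v) set \<Rightarrow> bool" where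
  "flag_transitive scale s G \<longleftrightarrow>
     (\<forall>J \<subseteq> {1..vector_space.dim scale (UNIV::'v set) - 1}.
        \<forall>F1 F2. is_flag scale s F1 \<and> flag_type scale F1 = J \<and>
               is_flag scale s F2 \<and> flag_type scale F2 = J \<longrightarrow>
               (\<exists>g\<in>G. (\<lambda>U. g ` U) ` F1 = F2))"

end

theory Submission
  imports Defs
begin

locale symp = finite_dimensional_vector_space scale Bas
  for scale :: "'a::field \<Rightarrow> 'v::ab_group_add \<Rightarrow> 'v" and Bas :: "'v set" +
  fixes s :: "'v \<Rightarrow> 'v \<Rightarrow> 'a"
  assumes bil: "bilinear_form scale s" and alt: "alternating s"
begin

abbreviation lin where "lin \<equiv> Vector_Spaces.linear scale scale"

definition isom :: "('v \<Rightarrow> 'v) \<Rightarrow> 'v set \<Rightarrow> bool" where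
  "isom g X \<longleftrightarrow> (\<forall>x\<in>X. \<forall>y\<in>X. s (g x) (g y) = s x y)"

lemma lin_r: "Vector_Spaces.linear scale (*) (s x)"
  using bil unfolding bilinear_form_def by blast
lemma lin_l: "Vector_Spaces.linear scale (*) (\<lambda>x. s x y)"
  using bil unfolding bilinear_form_def by blast

lemma s_add_r[simp]: "s x (y + z) = s x y + s x z"
  using lin_r[of x] unfolding Vector_Spaces.linear_iff by blast
lemma s_scale_r[simp]: "s x (scale c y) = c * s x y"
  using lin_r[of x] unfolding Vector_Spaces.linear_iff by blast
lemma s_add_l[simp]: "s (x + y) z = s x z + s y z"
  using lin_l[of z] unfolding Vector_Spaces.linear_iff by blast
lemma s_scale_l[simp]: "s (scale c x) z = c * s x z"
  using lin_l[of z] unfolding Vector_Spaces.linear_iff by blast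
lemma s_zero_r[simp]: "s x 0 = 0"
  using s_scale_r[of x 0 0] by simp
lemma s_zero_l[simp]: "s 0 x = 0"
  using s_scale_l[of 0 0 x] by simp
lemma s_neg_r[simp]: "s x (- y) = - s x y"
  by (metis add.right_inverse add_eq_0_iff s_add_r s_zero_r)
lemma s_neg_l[simp]: "s (- x) y = - s x y"
  by (metis add.right_inverse add_eq_0_iff s_add_l s_zero_l)
lemma s_diff_r[simp]: "s x (y - z) = s x y - s x z"
  by (metis diff_conv_add_uminus s_add_r s_neg_r)
lemma s_diff_l[simp]: "s (x - y) z = s x z - s y z"
  by (metis diff_conv_add_uminus s_add_l s_neg_l)
lemma s_alt[simp]: "s x x = 0"
  using alt unfolding alternating_def by blast
lemma skew: "s y x = - s x y"
proof -
  have "s (x + y) (x + y) = s x x + s y x + (s x y + s y y)" by (simp del: s_alt)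
  then have "s x y + s y x = 0" by (simp add: algebra_simps)
  then show ?thesis by (simp add: add_eq_0_iff)
qed
lemma s_sum_r: "s x (sum f A) = (\<Sum>i\<in>A. s x (f i))"
  by (induction A rule: infinite_finite_induct) auto
lemma s_sum_l: "s (sum f A) y = (\<Sum>i\<in>A. s (f i) y)"
  by (induction A rule: infinite_finite_induct) auto

lemma perp_subspace: "subspace (perp s A)"
  unfolding subspace_def perp_def by auto

lemma Rad_subspace: "subspace W \<Longrightarrow> subspace (Rad s W)"
  unfolding Rad_def by (simp add: subspace_inter perp_subspace)

lemma Rad_sub: "Rad s W \<subseteq> W" unfolding Rad_def by auto

lemma vs: "vector_space scale" by (rule vector_space_axioms)


lemma Rad_memI: "x \<in> W \<Longrightarrow> (\<And>y. y \<in> W \<Longrightarrow> s y x = 0) \<Longrightarrow> x \<in> Rad s W"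
  unfolding Rad_def perp_def by auto

lemma not_Rad: "x \<in> W \<Longrightarrow> x \<notin> Rad s W \<Longrightarrow> \<exists>y\<in>W. s x y \<noteq> 0"
proof -
  assume "x \<in> W" "x \<notin> Rad s W"
  then obtain y where "y \<in> W" "s y x \<noteq> 0" unfolding Rad_def perp_def by auto
  moreover have "s x y = - s y x" using skew[of x y] by simp
  ultimately show ?thesis by (metis neg_equal_0_iff_equal)
qed

lemma dual_exists_aux:
  assumes "finite T"
  shows "subspace W \<longrightarrow> T \<subseteq> W \<longrightarrow> independent T \<longrightarrow> span T \<inter> Rad s W = {0} \<longrightarrow>
         (\<forall>c. \<exists>w\<in>W. \<forall>b\<in>T. s b w = c b)"
  using assms
proof (induction T rule: finite_induct)
  case empty
  then show ?case by (auto simp: subspace_def)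
next
  case (insert a T)
  show ?case
  proof (intro impI allI)
    fix c
    assume W: "subspace W" and TW: "insert a T \<subseteq> W" and ind: "independent (insert a T)"
      and rad: "span (insert a T) \<inter> Rad s W = {0}"
    have indT: "independent T" using ind independent_mono by blast
    have aT: "a \<notin> span T" using ind insert(2) by (simp add: independent_insert)
    have radT: "span T \<inter> Rad s W = {0}"
      using rad span_mono[of T "insert a T"] span_zero[of T] Rad_subspace[OF W]
      by (auto simp: subspace_def)
    have IH: "\<forall>c. \<exists>w\<in>W. \<forall>b\<in>T. s b w = c b"
      using insert(3) W TW indT radT by blast
    have "\<forall>b\<in>T. \<exists>d. d \<in> W \<and> (\<forall>b'\<in>T. s b' d = (if b' = b then 1 else 0))"
    proof
      fix b assume "b \<in> T"
      show "\<exists>d. d \<in> W \<and> (\<forall>b'\<in>T. s b' d = (if b' = b then 1 else 0))"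
        using IH[rule_format, of "\<lambda>b'. if b' = b then 1 else 0"] by blast
    qed
    from bchoice[OF this] obtain d where dd: "\<forall>b\<in>T. d b \<in> W \<and> (\<forall>b'\<in>T. s b' (d b) = (if b' = b then 1 else 0))"
      ..
    have d: "\<And>b. b \<in> T \<Longrightarrow> d b \<in> W"
      "\<And>b b'. b \<in> T \<Longrightarrow> b' \<in> T \<Longrightarrow> s b' (d b) = (if b' = b then 1 else 0)"
      using dd by blast+
    define v where "v = a - (\<Sum>b\<in>T. scale (s a (d b)) b)"
    have sumT: "(\<Sum>b\<in>T. scale (s a (d b)) b) \<in> span T"
      by (intro span_sum span_scale span_base)
    have v0: "v \<noteq> 0"
    proof
      assume "v = 0"
      then have "a = (\<Sum>b\<in>T. scale (s a (d b)) b)" unfolding v_def by simp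
      then show False using aT sumT by simp
    qed
    have vspan: "v \<in> span (insert a T)"
      unfolding v_def
      using span_diff[OF span_base[OF insertI1] span_mono[OF subset_insertI, THEN subsetD, OF sumT]] .
    have vW: "v \<in> W"
      using vspan span_minimal[OF TW W] by blast
    have "v \<notin> Rad s W"
    proof
      assume "v \<in> Rad s W"
      then have "v \<in> span (insert a T) \<inter> Rad s W" using vspan by blast
      then show False using rad v0 by simp
    qed
    then obtain y where yW: "y \<in> W" and vy: "s v y \<noteq> 0"
      using not_Rad[OF vW] by blast
    define z where "z = y - (\<Sum>b\<in>T. scale (s b y) (d b))"
    have zW: "z \<in> W"
    proof -
      have "z \<in> span W" unfolding z_def
        by (intro span_diff span_sum span_scale) (auto intro: span_base yW d(1))
      then show ?thesis using W by (metis span_eq_iff)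
    qed
    have zT: "s b' z = 0" if "b' \<in> T" for b'
    proof -
      have "s b' z = s b' y - (\<Sum>b\<in>T. s b y * (if b' = b then 1 else 0))"
      proof -
        have "(\<Sum>b\<in>T. s b' (scale (s b y) (d b))) = (\<Sum>b\<in>T. s b y * (if b' = b then 1 else 0))"
          by (rule sum.cong) (auto simp: d(2) that)
        then show ?thesis unfolding z_def by (simp add: s_sum_r)
      qed
      also have "\<dots> = 0"
      proof -
        have "(\<Sum>b\<in>T. s b y * (if b' = b then 1 else 0)) = (\<Sum>b\<in>T. if b' = b then s b y else 0)"
          by (rule sum.cong) auto
        then show ?thesis using that by (simp add: sum.delta'[OF insert(1)])
      qed
      finally show ?thesis .
    qed
    have za: "s a z = s v y"
      unfolding z_def v_def by (simp add: s_sum_r s_sum_l ac_simps)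
    obtain w0 where w0: "w0 \<in> W" "\<And>b. b \<in> T \<Longrightarrow> s b w0 = c b"
      using IH by blast
    define w where "w = w0 + scale ((c a - s a w0) / s a z) z"
    have "w \<in> W" unfolding w_def using W w0(1) zW by (simp add: subspace_def)
    moreover have "\<forall>b\<in>insert a T. s b w = c b"
    proof
      fix b assume "b \<in> insert a T"
      then consider "b = a" | "b \<in> T" by blast
      then show "s b w = c b"
      proof cases
        case 1
        have "s a w = s a w0 + (c a - s a w0) / s a z * s a z" unfolding w_def by simp
        also have "\<dots> = c a" using za vy by simp
        finally show ?thesis using 1 by simp
      next
        case 2
        then show ?thesis unfolding w_def using w0 zT by simp
      qed
    qed
    ultimately show "\<exists>w\<in>W. \<forall>b\<in>insert a T. s b w = c b" by blast
  qed
qed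


lemma dual_exists:
  assumes "subspace W" "T \<subseteq> W" "independent T" "span T \<inter> Rad s W = {0}"
  shows "\<exists>w\<in>W. \<forall>b\<in>T. s b w = c b"
  using dual_exists_aux[OF finiteI_independent[OF assms(3)]] assms by blast

lemma lin_add: "lin g \<Longrightarrow> g (x + y) = g x + g y"
  unfolding Vector_Spaces.linear_iff by blast
lemma lin_scale: "lin g \<Longrightarrow> g (scale c x) = scale c (g x)"
  unfolding Vector_Spaces.linear_iff by blast
lemma lin_0: "lin g \<Longrightarrow> g 0 = 0"
  using lin_scale[of g 0 0] by simp
lemma lin_neg: "lin g \<Longrightarrow> g (- x) = - g x"
  by (metis add.right_inverse add_eq_0_iff lin_0 lin_add)
lemma lin_diff: "lin g \<Longrightarrow> g (x - y) = g x - g y"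
  by (metis diff_conv_add_uminus lin_add lin_neg)

lemma dual_map:
  assumes lg: "lin g" and U: "subspace U" and inj: "inj_on g U" and W': "subspace W'"
    and gU: "g ` U \<subseteq> W'" and rad: "g ` U \<inter> Rad s W' = {0}"
  shows "\<exists>f'\<in>W'. \<forall>x\<in>U. s (g x) f' = s x f"
proof -
  obtain T where T: "T \<subseteq> U" "independent T" "U \<subseteq> span T" "card T = dim U"
    using basis_exists by blast
  have spT: "span T = U" using T U span_subspace by blast
  interpret lg: Vector_Spaces.linear scale scale g by fact
  have indT': "independent (g ` T)"
    using lg.independent_injective_image[OF T(2)] inj unfolding spT .
  have spT': "span (g ` T) = g ` U" using lg.span_image[of T] unfolding spT .
  have gT: "g ` T \<subseteq> W'" using gU T(1) by blast
  have radT: "span (g ` T) \<inter> Rad s W' = {0}" unfolding spT' by (rule rad)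
  obtain f' where f': "f' \<in> W'" "\<forall>b\<in>g ` T. s b f' = s (inv_into T g b) f"
    using dual_exists[OF W' gT indT' radT, of "\<lambda>b. s (inv_into T g b) f"] by blast
  have injT: "inj_on g T" using inj T(1) inj_on_subset by blast
  have "s (g x) f' = s x f" if "x \<in> span T" for x
    using that
  proof (induction rule: span_induct_alt)
    case base
    then show ?case using lin_0[OF lg] by simp
  next
    case (step c x y)
    have "s (g x) f' = s (inv_into T g (g x)) f" using f'(2) step(1) by blast
    then have "s (g x) f' = s x f" using injT step(1) by (simp add: inv_into_f_f)
    then show ?case using step lin_add[OF lg] lin_scale[OF lg] by simp
  qed
  then show ?thesis using f'(1) spT by blast
qed

definition proj where "proj e f x = scale (s x f) e - scale (s x e) f"

lemma proj_perp:
  assumes "s e f = 1"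
  shows "s e (x - proj e f x) = 0" "s f (x - proj e f x) = 0"
proof -
  have sfe: "s f e = -1" by (subst skew) (simp add: assms)
  show "s e (x - proj e f x) = 0" unfolding proj_def using assms skew[of x e] by simp
  show "s f (x - proj e f x) = 0" unfolding proj_def using assms sfe skew[of x f] by simp
qed

lemma sub_diff: "subspace W \<Longrightarrow> x \<in> W \<Longrightarrow> y \<in> W \<Longrightarrow> x - y \<in> W"
  by (metis span_diff span_eq_iff)
lemma sub_add: "subspace W \<Longrightarrow> x \<in> W \<Longrightarrow> y \<in> W \<Longrightarrow> x + y \<in> W"
  by (metis span_add span_eq_iff)
lemma sub_scale: "subspace W \<Longrightarrow> x \<in> W \<Longrightarrow> scale c x \<in> W"
  by (metis span_scale span_eq_iff)
lemma sub_0: "subspace W \<Longrightarrow> 0 \<in> W"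
  by (simp add: subspace_def)

lemma proj_in: "subspace W \<Longrightarrow> e \<in> W \<Longrightarrow> f \<in> W \<Longrightarrow> proj e f x \<in> W"
  unfolding proj_def by (intro sub_diff sub_scale)


lemma perp2: "perp s {e, f} = {v. s e v = 0 \<and> s f v = 0}"
  unfolding perp_def by auto

lemma split:
  assumes W: "subspace W" and eW: "e \<in> W" and fW: "f \<in> W" and ef: "s e f = 1"
  shows "subspace (W \<inter> perp s {e, f})"
    and "\<And>x. x \<in> W \<Longrightarrow> x - proj e f x \<in> W \<inter> perp s {e, f}"
    and "dim W = dim (W \<inter> perp s {e, f}) + 2"
    and "Rad s (W \<inter> perp s {e, f}) = Rad s W"
proof -
  define W1 where "W1 = W \<inter> perp s {e, f}"
  have sfe: "s f e = -1" by (subst skew) (simp add: ef)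
  show W1: "subspace (W \<inter> perp s {e, f})" using W perp_subspace subspace_inter by blast
  show dec: "x - proj e f x \<in> W \<inter> perp s {e, f}" if "x \<in> W" for x
    using proj_perp[OF ef] sub_diff[OF W that proj_in[OF W eW fW]] perp2 by auto
  have W1': "subspace W1" using W1 W1_def by simp
  have "W = span (insert e (insert f W1))"
  proof
    show "W \<subseteq> span (insert e (insert f W1))"
    proof
      fix x assume x: "x \<in> W"
      have "x = (x - proj e f x) + scale (s x f) e - scale (s x e) f"
        unfolding proj_def by (simp add: algebra_simps)
      moreover have "x - proj e f x \<in> span (insert e (insert f W1))"
        using dec[OF x] W1_def by (auto intro: span_base)
      moreover have "e \<in> span (insert e (insert f W1))" "f \<in> span (insert e (insert f W1))"
        by (auto intro: span_base)
      ultimately show "x \<in> span (insert e (insert f W1))"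
        by (metis span_add span_diff span_scale)
    qed
    show "span (insert e (insert f W1)) \<subseteq> W"
      using W eW fW W1_def by (intro span_minimal) auto
  qed
  then have "dim W = dim (insert e (insert f W1))" by (metis dim_span)
  moreover have "f \<notin> span W1"
  proof
    assume "f \<in> span W1"
    then have "f \<in> W1" using W1' by (metis span_eq_iff)
    then show False using ef perp2 W1_def by auto
  qed
  moreover have "e \<notin> span (insert f W1)"
  proof
    assume "e \<in> span (insert f W1)"
    then obtain k where "e - scale k f \<in> span W1" unfolding span_insert by blast
    then have k: "e - scale k f \<in> W1" using W1' by (metis span_eq_iff)
    then have "s f (e - scale k f) = 0" using W1_def perp2 by auto
    then show False using sfe by simp
  qed
  ultimately show "dim W = dim (W \<inter> perp s {e, f}) + 2"
    using W1_def by (simp add: dim_insert)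
  show "Rad s (W \<inter> perp s {e, f}) = Rad s W"
  proof
    show "Rad s W \<subseteq> Rad s (W \<inter> perp s {e, f})"
      unfolding Rad_def perp_def using eW fW by auto
    show "Rad s (W \<inter> perp s {e, f}) \<subseteq> Rad s W"
    proof
      fix r assume r: "r \<in> Rad s (W \<inter> perp s {e, f})"
      then have rW: "r \<in> W" and re: "s e r = 0" and rf: "s f r = 0"
        unfolding Rad_def perp_def by auto
      show "r \<in> Rad s W"
      proof (rule Rad_memI[OF rW])
        fix y assume y: "y \<in> W"
        have "r \<in> perp s (W \<inter> perp s {e, f})" using r unfolding Rad_def by blast
        then have "s (y - proj e f y) r = 0" using dec[OF y]
          unfolding perp_def[of s "W \<inter> perp s {e, f}"] by blast
        moreover have "s (proj e f y) r = 0" unfolding proj_def using re rf by simp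
        ultimately show "s y r = 0" by simp
      qed
    qed
  qed
qed


lemma norm_pair:
  assumes W: "subspace W" and "x \<in> W" "y \<in> W" "s x y \<noteq> 0"
  shows "\<exists>e\<in>W. \<exists>f\<in>W. s e f = 1"
proof -
  have "scale (1 / s x y) x \<in> W" using assms sub_scale by blast
  moreover have "s (scale (1 / s x y) x) y = 1" using assms(4) by simp
  ultimately show ?thesis using assms(3) by blast
qed

lemma all_zero_Rad: "(\<forall>x\<in>W. \<forall>y\<in>W. s x y = 0) \<Longrightarrow> Rad s W = W"
  unfolding Rad_def perp_def by auto

lemma parity: "subspace W \<Longrightarrow> even (dim W - dim (Rad s W))"
proof (induction "dim W" arbitrary: W rule: less_induct)
  case less
  show ?case
  proof (cases "\<forall>x\<in>W. \<forall>y\<in>W. s x y = 0")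
    case True
    then show ?thesis using all_zero_Rad by simp
  next
    case False
    then obtain e f where ef: "e \<in> W" "f \<in> W" "s e f = 1"
      using norm_pair[OF less.prems] by blast
    note sp = split[OF less.prems ef]
    have "dim (W \<inter> perp s {e, f}) < dim W" using sp(3) by simp
    then have ev: "even (dim (W \<inter> perp s {e, f}) - dim (Rad s W))"
      using less.hyps[OF _ sp(1)] sp(4) by simp
    have "dim (Rad s W) \<le> dim (W \<inter> perp s {e, f})"
      using dim_subset[OF Rad_sub[of "W \<inter> perp s {e, f}"]] sp(4) by simp
    then show ?thesis using ev sp(3) by auto
  qed
qed

definition good where
  "good W W' U U' g \<longleftrightarrow> subspace W \<and> subspace W' \<and> subspace U \<and> subspace U' \<and>
     U \<subseteq> W \<and> U' \<subseteq> W' \<and> dim W = dim W' \<and> dim (Rad s W) = dim (Rad s W') \<and>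
     U \<inter> Rad s W = {0} \<and> U' \<inter> Rad s W' = {0} \<and> lin g \<and> g ` U = U' \<and> inj_on g U \<and> isom g U"

definition extends where
  "extends W W' U g h \<longleftrightarrow> lin h \<and> h ` W = W' \<and> inj_on h W \<and> isom h W \<and> (\<forall>x\<in>U. h x = g x)"

lemma proj_0[simp]: "proj e f 0 = 0" unfolding proj_def by simp

lemma decomp_s:
  assumes "s e f = 1" "s e u = 0" "s f u = 0" "s e v = 0" "s f v = 0"
  shows "s (scale a e - scale b f + u) (scale c e - scale d f + v) = b * c - a * d + s u v"
proof -
  have sfe: "s f e = -1" by (subst skew) (simp add: assms)
  have "s u e = 0" "s u f = 0" using skew[of e u] skew[of f u] assms by simp_all
  then show ?thesis using assms sfe by (simp add: algebra_simps)
qed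

lemma proj_decomp: "x = scale (s x f) e - scale (s x e) f + (x - proj e f x)"
  unfolding proj_def by simp


lemma perp2_mem: "v \<in> perp s {e, f} \<longleftrightarrow> s e v = 0 \<and> s f v = 0"
  unfolding perp_def by auto

lemma glue:
  assumes IH: "\<And>W1 W1' U1 U1' g1. good W1 W1' U1 U1' g1 \<Longrightarrow> dim W1 < dim W \<Longrightarrow> \<exists>h. extends W1 W1' U1 g1 h"
    and G: "good W W' U U' g"
    and eW: "e \<in> W" and fW: "f \<in> W" and eW': "e' \<in> W'" and fW': "f' \<in> W'"
    and ef: "s e f = 1" and ef': "s e' f' = 1"
    and H1: "\<forall>x\<in>U. x - proj e f x \<in> U"
    and H2: "\<forall>x\<in>U. g (x - proj e f x) = g x - proj e' f' (g x)"
    and H3: "\<forall>x\<in>U. s (g x) e' = s x e \<and> s (g x) f' = s x f"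
  shows "\<exists>h. extends W W' U g h"
proof -
  from G have W: "subspace W" and W': "subspace W'" and U: "subspace U" and U': "subspace U'"
    and UW: "U \<subseteq> W" and UW': "U' \<subseteq> W'" and dW: "dim W = dim W'"
    and dR: "dim (Rad s W) = dim (Rad s W')" and UR: "U \<inter> Rad s W = {0}"
    and UR': "U' \<inter> Rad s W' = {0}" and lg: "lin g" and gU: "g ` U = U'"
    and ig: "inj_on g U" and sg: "isom g U"
    unfolding good_def by blast+
  define W1 where "W1 = W \<inter> perp s {e, f}"
  define W1' where "W1' = W' \<inter> perp s {e', f'}"
  define U1 where "U1 = U \<inter> perp s {e, f}"
  define U1' where "U1' = U' \<inter> perp s {e', f'}"
  note sp = split[OF W eW fW ef, folded W1_def]
  note sp' = split[OF W' eW' fW' ef', folded W1'_def]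
  have sfe: "s f e = -1" by (subst skew) (simp add: ef)
  have sfe': "s f' e' = -1" by (subst skew) (simp add: ef')
  have "good W1 W1' U1 U1' g"
    unfolding good_def
  proof (intro conjI)
    show "subspace W1" "subspace W1'" by (fact sp(1)) (fact sp'(1))
    show "subspace U1" "subspace U1'"
      unfolding U1_def U1'_def using U U' perp_subspace subspace_inter by blast+
    show "U1 \<subseteq> W1" "U1' \<subseteq> W1'" using UW UW' unfolding U1_def W1_def U1'_def W1'_def by auto
    show "dim W1 = dim W1'" using sp(3) sp'(3) dW by simp
    show "dim (Rad s W1) = dim (Rad s W1')" using sp(4) sp'(4) dR by simp
    show "U1 \<inter> Rad s W1 = {0}"
      using UR sp(4) sub_0[OF sp(1)] sub_0[OF W] Rad_subspace[OF W] sub_0 U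
      unfolding U1_def by (auto simp: perp2_mem)
    show "U1' \<inter> Rad s W1' = {0}"
      using UR' sp'(4) Rad_subspace[OF W'] sub_0 U'
      unfolding U1'_def by (auto simp: perp2_mem)
    show "lin g" by (fact lg)
    show "g ` U1 = U1'"
    proof
      show "g ` U1 \<subseteq> U1'"
      proof
        fix y assume "y \<in> g ` U1"
        then obtain x where x0: "x \<in> U1" "y = g x" by blast
        then have x: "x \<in> U" "s e x = 0" "s f x = 0" "y = g x"
          unfolding U1_def by (auto simp: perp2_mem)
        have "s e' y = 0" using skew[of e' y] H3 x skew[of e x] by simp
        moreover have "s f' y = 0" using skew[of f' y] H3 x skew[of f x] by simp
        ultimately show "y \<in> U1'" using x gU unfolding U1'_def by (auto simp: perp2_mem)
      qed
      show "U1' \<subseteq> g ` U1"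
      proof
        fix y assume y: "y \<in> U1'"
        then obtain x where x: "x \<in> U" "y = g x" using gU unfolding U1'_def by auto
        have "s e' y = 0" "s f' y = 0" using y unfolding U1'_def by (auto simp: perp2_mem)
        then have "s e x = 0" "s f x = 0"
          using skew[of e' y] skew[of f' y] H3 x skew[of e x] skew[of f x] by simp_all
        then show "y \<in> g ` U1" using x unfolding U1_def by (auto simp: perp2_mem)
      qed
    qed
    show "inj_on g U1" using ig inj_on_subset unfolding U1_def by blast
    show "isom g U1" using sg unfolding isom_def U1_def by blast
  qed
  moreover have "dim W1 < dim W" using sp(3) by simp
  ultimately obtain h1 where h1: "extends W1 W1' U1 g h1" using IH by blast
  from h1 have lh1: "lin h1" and h1W: "h1 ` W1 = W1'" and ih1: "inj_on h1 W1"
    and sh1: "isom h1 W1" and h1g: "\<forall>x\<in>U1. h1 x = g x"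
    unfolding extends_def by blast+
  define h where "h x = scale (s x f) e' - scale (s x e) f' + h1 (x - proj e f x)" for x
  have h1perp: "s e' (h1 z) = 0 \<and> s f' (h1 z) = 0" if "z \<in> W1" for z
    using h1W that unfolding W1'_def by (auto simp: perp2_mem)
  have hf: "s (h x) f' = s x f" and he: "s (h x) e' = s x e" if "x \<in> W" for x
  proof -
    have z: "x - proj e f x \<in> W1" using sp(2) that .
    have a: "s (h1 (x - proj e f x)) f' = 0" "s (h1 (x - proj e f x)) e' = 0"
      using h1perp[OF z] skew[of f' "h1 (x - proj e f x)"] skew[of e' "h1 (x - proj e f x)"]
      by simp_all
    show "s (h x) f' = s x f" unfolding h_def using a ef' by simp
    show "s (h x) e' = s x e" unfolding h_def using a ef' sfe' by simp
  qed
  have proj_add: "proj e f (x + y) = proj e f x + proj e f y" for e f x y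
    unfolding proj_def by (simp add: algebra_simps)
  have proj_scale: "proj e f (scale c x) = scale c (proj e f x)" for e f c x
    unfolding proj_def by (simp add: algebra_simps)
  have "lin h"
    unfolding Vector_Spaces.linear_iff
  proof (intro conjI allI)
    show "vector_space scale" by (fact vs)
    show "vector_space scale" by (fact vs)
    fix x y
    have "h (x + y) = scale (s x f + s y f) e' - scale (s x e + s y e) f' +
        h1 ((x - proj e f x) + (y - proj e f y))"
      unfolding h_def by (simp add: proj_add algebra_simps)
    also have "\<dots> = h x + h y"
      unfolding h_def lin_add[OF lh1] by (simp add: algebra_simps)
    finally show "h (x + y) = h x + h y" .
  next
    fix c x
    have "h (scale c x) = scale (c * s x f) e' - scale (c * s x e) f' +
        h1 (scale c (x - proj e f x))"
      unfolding h_def by (simp add: proj_scale algebra_simps)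
    also have "\<dots> = scale c (h x)"
      unfolding h_def lin_scale[OF lh1] by (simp add: algebra_simps)
    finally show "h (scale c x) = scale c (h x)" .
  qed
  moreover have "h ` W = W'"
  proof
    show "h ` W \<subseteq> W'"
    proof
      fix y assume "y \<in> h ` W"
      then obtain x where x: "x \<in> W" "y = h x" by auto
      have "h1 (x - proj e f x) \<in> W'" using h1W sp(2)[OF x(1)] unfolding W1'_def by blast
      then show "y \<in> W'" unfolding x h_def
        using W' eW' fW' by (intro sub_add sub_diff sub_scale)
    qed
    show "W' \<subseteq> h ` W"
    proof
      fix y assume y: "y \<in> W'"
      have "y - proj e' f' y \<in> h1 ` W1" using sp'(2)[OF y] h1W by simp
      then obtain x1 where x1: "x1 \<in> W1" "h1 x1 = y - proj e' f' y" by auto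
      have x1p: "s e x1 = 0" "s f x1 = 0" using x1(1) unfolding W1_def by (auto simp: perp2_mem)
      have x1p': "s x1 e = 0" "s x1 f = 0" using x1p skew[of e x1] skew[of f x1] by simp_all
      define x where "x = scale (s y f') e - scale (s y e') f + x1"
      have xW: "x \<in> W" unfolding x_def using W eW fW x1(1) W1_def
        by (intro sub_add sub_diff sub_scale) auto
      have xf: "s x f = s y f'" unfolding x_def using ef x1p' by simp
      have xe: "s x e = s y e'" unfolding x_def using sfe x1p' by simp
      have "proj e f x = scale (s y f') e - scale (s y e') f" unfolding proj_def xf xe ..
      then have "x - proj e f x = x1" unfolding x_def by simp
      then have "h x = scale (s y f') e' - scale (s y e') f' + h1 x1" unfolding h_def xf xe by simp
      also have "\<dots> = y" using x1(2) unfolding proj_def by simp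
      finally have "h x = y" .
      then show "y \<in> h ` W" using xW by blast
    qed
  qed
  moreover have "inj_on h W"
  proof (rule inj_onI)
    fix x y assume x: "x \<in> W" and y: "y \<in> W" and hxy: "h x = h y"
    define z where "z = x - y"
    have zW: "z \<in> W" unfolding z_def using W x y by (rule sub_diff)
    have hz: "h z = 0" unfolding z_def using hxy lin_diff[OF \<open>lin h\<close>] by simp
    have "s z f = 0" using hf[OF zW] hz by simp
    moreover have "s z e = 0" using he[OF zW] hz by simp
    ultimately have pz: "proj e f z = 0" unfolding proj_def by simp
    then have zW1: "z \<in> W1" using sp(2)[OF zW] by simp
    have "h1 z = 0" using hz pz \<open>s z f = 0\<close> \<open>s z e = 0\<close> unfolding h_def by simp
    then have "z = 0" using ih1 zW1 sub_0[OF sp(1)] lin_0[OF lh1] unfolding inj_on_def by metis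
    then show "x = y" unfolding z_def by simp
  qed
  moreover have "isom h W"
    unfolding isom_def
  proof (intro ballI)
    fix x y assume x: "x \<in> W" and y: "y \<in> W"
    have px: "x - proj e f x \<in> W1" and py: "y - proj e f y \<in> W1" using sp(2) x y by auto
    have "s x y = s x e * s y f - s x f * s y e + s (x - proj e f x) (y - proj e f y)"
      using decomp_s[OF ef, of "x - proj e f x" "y - proj e f y" "s x f" "s x e" "s y f" "s y e"]
        px py proj_decomp[of x f e] proj_decomp[of y f e]
      unfolding W1_def by (auto simp: perp2_mem)
    moreover have "s (h x) (h y) = s x e * s y f - s x f * s y e +
        s (h1 (x - proj e f x)) (h1 (y - proj e f y))"
      unfolding h_def
      using decomp_s[OF ef', of "h1 (x - proj e f x)" "h1 (y - proj e f y)" "s x f" "s x e" "s y f" "s y e"]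
        h1perp[OF px] h1perp[OF py] by simp
    ultimately show "s (h x) (h y) = s x y" using sh1 px py unfolding isom_def by simp
  qed
  moreover have "\<forall>x\<in>U. h x = g x"
  proof
    fix x assume x: "x \<in> U"
    have "x - proj e f x \<in> U1"
      using H1 x sp(2) UW unfolding U1_def W1_def by blast
    then have "h1 (x - proj e f x) = g x - proj e' f' (g x)" using h1g H2 x by simp
    then show "h x = g x" unfolding h_def proj_def using H3 x by simp
  qed
  ultimately show ?thesis unfolding extends_def by blast
qed


lemma iso_exists:
  assumes "subspace S" "subspace T" "dim S = dim T"
  shows "\<exists>h. lin h \<and> h ` S = T \<and> inj_on h S"
proof -
  interpret fp: finite_dimensional_vector_space_pair scale Bas scale Bas
    by (intro finite_dimensional_vector_space_pair.intro finite_dimensional_vector_space_axioms)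
  show ?thesis using fp.subspace_isomorphism[OF assms] .
qed

lemma ext_main: "good W W' U U' g \<Longrightarrow> \<exists>h. extends W W' U g h"
proof (induction "dim W" arbitrary: W W' U U' g rule: less_induct)
  case less
  have IH: "\<And>W1 W1' U1 U1' g1. good W1 W1' U1 U1' g1 \<Longrightarrow> dim W1 < dim W \<Longrightarrow> \<exists>h. extends W1 W1' U1 g1 h"
    using less.hyps by blast
  note G = less.prems
  from G have W: "subspace W" and W': "subspace W'" and U: "subspace U" and U': "subspace U'"
    and UW: "U \<subseteq> W" and UW': "U' \<subseteq> W'" and dW: "dim W = dim W'"
    and dR: "dim (Rad s W) = dim (Rad s W')" and UR: "U \<inter> Rad s W = {0}"
    and UR': "U' \<inter> Rad s W' = {0}" and lg: "lin g" and gU: "g ` U = U'"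
    and ig: "inj_on g U" and sg: "isom g U"
    unfolding good_def by blast+
  show ?case
  proof (cases "\<forall>x\<in>W. \<forall>y\<in>W. s x y = 0")
    case True
    then have RW: "Rad s W = W" by (rule all_zero_Rad)
    then have U0: "U = {0}" using UR UW sub_0[OF U] by blast
    have "Rad s W' = W'"
      using subspace_dim_equal[OF Rad_subspace[OF W'] W' Rad_sub] dR dW RW by simp
    obtain h where h: "lin h" "h ` W = W'" "inj_on h W" using iso_exists[OF W W' dW] by blast
    have "isom h W"
      unfolding isom_def
    proof (intro ballI)
      fix x y assume "x \<in> W" "y \<in> W"
      then have "h y \<in> Rad s W'" "h x \<in> W'" using h(2) \<open>Rad s W' = W'\<close> by auto
      then have "s (h x) (h y) = 0" unfolding Rad_def perp_def by blast
      then show "s (h x) (h y) = s x y" using True \<open>x \<in> W\<close> \<open>y \<in> W\<close> by simp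
    qed
    moreover have "\<forall>x\<in>U. h x = g x" using U0 lin_0[OF h(1)] lin_0[OF lg] by simp
    ultimately show ?thesis using h unfolding extends_def by blast
  next
    case False
    then obtain e f where ef: "e \<in> W" "f \<in> W" "s e f = 1"
      using norm_pair[OF W] by blast
    have "\<not> (\<forall>x\<in>W'. \<forall>y\<in>W'. s x y = 0)"
    proof
      assume "\<forall>x\<in>W'. \<forall>y\<in>W'. s x y = 0"
      then have "Rad s W' = W'" by (rule all_zero_Rad)
      then have "Rad s W = W"
        using subspace_dim_equal[OF Rad_subspace[OF W] W Rad_sub] dR dW by simp
      then show False using False unfolding Rad_def perp_def by auto
    qed
    then obtain e' f' where ef': "e' \<in> W'" "f' \<in> W'" "s e' f' = 1"
      using norm_pair[OF W'] by blast
    consider "U = {0}" | "\<exists>x\<in>U. \<exists>y\<in>U. s x y \<noteq> 0" | "U \<noteq> {0}" "\<forall>x\<in>U. \<forall>y\<in>U. s x y = 0"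
      by blast
    then show ?thesis
    proof cases
      case 1
      show ?thesis
        by (rule glue[OF IH G ef(1,2) ef'(1,2) ef(3) ef'(3)]) (auto simp: 1 lin_0[OF lg])
    next
      case 2
      then obtain a b where ab: "a \<in> U" "b \<in> U" "s a b = 1"
        using norm_pair[OF U] by blast
      have ab': "s (g a) (g b) = 1" using sg ab unfolding isom_def by simp
      show ?thesis
      proof (rule glue[OF IH G _ _ _ _ ab(3) ab'])
        show "a \<in> W" "b \<in> W" using ab UW by auto
        show "g a \<in> W'" "g b \<in> W'" using ab UW' gU by auto
        show "\<forall>x\<in>U. x - proj a b x \<in> U" using U ab proj_in sub_diff by blast
        show "\<forall>x\<in>U. g (x - proj a b x) = g x - proj (g a) (g b) (g x)"
        proof
          fix x assume x: "x \<in> U"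
          have "s (g x) (g b) = s x b" "s (g x) (g a) = s x a" using sg x ab unfolding isom_def by auto
          then show "g (x - proj a b x) = g x - proj (g a) (g b) (g x)"
            unfolding proj_def using lin_diff[OF lg] lin_scale[OF lg] by simp
        qed
        show "\<forall>x\<in>U. s (g x) (g a) = s x a \<and> s (g x) (g b) = s x b"
          using sg ab unfolding isom_def by auto
      qed
    next
      case 3
      then obtain u where u: "u \<in> U" "u \<noteq> 0" using sub_0[OF U] by blast
      have "u \<notin> Rad s W"
      proof
        assume "u \<in> Rad s W"
        then have "u \<in> U \<inter> Rad s W" using u by blast
        then show False using UR u(2) by simp
      qed
      moreover have "u \<in> W" using u UW by blast
      ultimately obtain y where y: "y \<in> W" "s u y \<noteq> 0" using not_Rad by blast
      define f0 where "f0 = scale (1 / s u y) y"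
      have f0: "f0 \<in> W" "s u f0 = 1" unfolding f0_def using y sub_scale[OF W] by auto
      have gUW': "g ` U \<subseteq> W'" using gU UW' by simp
      have gUR: "g ` U \<inter> Rad s W' = {0}" using gU UR' by simp
      obtain f1 where f1: "f1 \<in> W'" "\<forall>x\<in>U. s (g x) f1 = s x f0"
        using dual_map[OF lg U ig W' gUW' gUR] by blast
      have uf1: "s (g u) f1 = 1" using f1 u f0 by simp
      show ?thesis
      proof (rule glue[OF IH G _ f0(1) _ f1(1) f0(2) uf1])
        show "u \<in> W" using u UW by auto
        show "g u \<in> W'" using u UW' gU by auto
        have sxu: "s x u = 0" if "x \<in> U" for x using 3(2) that u(1) by blast
        show "\<forall>x\<in>U. x - proj u f0 x \<in> U"
        proof
          fix x assume x: "x \<in> U"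
          have "x - proj u f0 x = x - scale (s x f0) u" unfolding proj_def using sxu[OF x] by simp
          then show "x - proj u f0 x \<in> U" using sub_diff[OF U x sub_scale[OF U u(1)]] by simp
        qed
        show "\<forall>x\<in>U. g (x - proj u f0 x) = g x - proj (g u) f1 (g x)"
        proof
          fix x assume x: "x \<in> U"
          have "s (g x) (g u) = s x u" using sg x u unfolding isom_def by auto
          then show "g (x - proj u f0 x) = g x - proj (g u) f1 (g x)"
            unfolding proj_def using lin_diff[OF lg] lin_scale[OF lg] sxu[OF x] f1(2) x by simp
        qed
        show "\<forall>x\<in>U. s (g x) (g u) = s x u \<and> s (g x) f1 = s x f0"
          using sg u f1 unfolding isom_def by auto
      qed
    qed
  qed
qed


definition gflag where
  "gflag F \<longleftrightarrow> (\<forall>X\<in>F. subspace X \<and> dim (Rad s X) \<le> 1) \<and> (\<forall>X\<in>F. \<forall>Y\<in>F. incident s X Y)"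

lemma gflag_dim_inj:
  assumes "gflag F" "X \<in> F" "Y \<in> F" "dim X = dim Y"
  shows "X = Y"
proof -
  have sX: "subspace X" and sY: "subspace Y" using assms unfolding gflag_def by auto
  have "incident s X Y" using assms unfolding gflag_def by auto
  then consider "X = Y" | "X \<subseteq> Y" | "Y \<subseteq> X" unfolding incident_def by blast
  then show ?thesis
    using subspace_dim_equal[OF sX sY] subspace_dim_equal[OF sY sX] assms(4) by (cases) auto
qed

lemma gflag_subset: "gflag F \<Longrightarrow> G \<subseteq> F \<Longrightarrow> gflag G"
  unfolding gflag_def by blast

lemma top_lemma:
  assumes gf: "gflag F" and fin: "finite F" and M: "M \<in> F"
    and mx: "\<forall>X\<in>F - {M}. dim X < dim M"
  shows "span (\<Union>(F - {M})) \<subseteq> M" "span (\<Union>(F - {M})) \<inter> Rad s M = {0}"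
proof -
  have sM: "subspace M" using gf M unfolding gflag_def by auto
  have have0: "0 \<in> span (\<Union>(F - {M})) \<inter> Rad s M"
    using span_zero sub_0[OF Rad_subspace[OF sM]] by blast
  have "span (\<Union>(F - {M})) \<subseteq> M \<and> span (\<Union>(F - {M})) \<inter> Rad s M \<subseteq> {0}"
  proof (cases "F - {M} = {}")
    case True
    then have "\<Union>(F - {M}) = {}" by (simp only: True Union_empty)
    then have "span (\<Union>(F - {M})) = {0}" by (simp only: span_empty)
    then show ?thesis using sub_0[OF sM] by auto
  next
    case False
    define m where "m = Max (dim ` (F - {M}))"
    have fin0: "finite (dim ` (F - {M}))" using fin by simp
    have "m \<in> dim ` (F - {M})" unfolding m_def using Max_in[OF fin0] False by simp
    then obtain X0 where X0: "X0 \<in> F - {M}" "dim X0 = m" by blast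
    have le: "dim X \<le> dim X0" if "X \<in> F - {M}" for X
      using Max_ge[OF fin0] that X0(2) unfolding m_def by simp
    have sX0: "subspace X0" using gf X0 unfolding gflag_def by auto
    have sub: "X \<subseteq> X0" if X: "X \<in> F - {M}" for X
    proof -
      have sX: "subspace X" using gf X unfolding gflag_def by auto
      have "incident s X X0" using gf X X0 unfolding gflag_def by auto
      then consider "X = X0" | "X \<subseteq> X0" | "X0 \<subseteq> X" unfolding incident_def by blast
      then show ?thesis
      proof cases
        case 3
        then have "dim X0 \<le> dim X" by (rule dim_subset)
        then have "X0 = X" using subspace_dim_equal[OF sX0 sX 3] le[OF X] by simp
        then show ?thesis by simp
      qed auto
    qed
    have "incident s X0 M" using gf X0 M unfolding gflag_def by auto
    moreover have "X0 \<noteq> M" using X0 by blast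
    moreover have "\<not> M \<subseteq> X0"
    proof
      assume "M \<subseteq> X0"
      then have "dim M \<le> dim X0" by (rule dim_subset)
      moreover have "dim X0 < dim M" using mx X0(1) by blast
      ultimately show False by simp
    qed
    ultimately have X0M: "X0 \<subseteq> M" "X0 \<inter> Rad s M = {0}" unfolding incident_def by blast+
    have "span (\<Union>(F - {M})) \<subseteq> X0" using sub sX0 by (intro span_minimal) auto
    then show ?thesis using X0M by blast
  qed
  then show "span (\<Union>(F - {M})) \<subseteq> M" "span (\<Union>(F - {M})) \<inter> Rad s M = {0}" using have0 by blast+
qed

lemma rad_dims_equal:
  assumes "subspace M" "subspace M'" "dim M = dim M'" "dim (Rad s M) \<le> 1" "dim (Rad s M') \<le> 1"
  shows "dim (Rad s M) = dim (Rad s M')"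
proof -
  have "even (dim M - dim (Rad s M))" "even (dim M' - dim (Rad s M'))"
    using parity[OF assms(1)] parity[OF assms(2)] by blast+
  moreover have "dim (Rad s M) \<le> dim M" "dim (Rad s M') \<le> dim M'"
    using dim_subset[OF Rad_sub] by auto
  moreover have "\<And>a b d :: nat. even (d - a) \<Longrightarrow> even (d - b) \<Longrightarrow> a \<le> d \<Longrightarrow> b \<le> d \<Longrightarrow>
     a \<le> 1 \<Longrightarrow> b \<le> 1 \<Longrightarrow> a = b"
  proof -
    fix a b d :: nat
    assume h: "even (d - a)" "even (d - b)" "a \<le> d" "b \<le> d" "a \<le> 1" "b \<le> 1"
    have "a = 0 \<or> a = 1" "b = 0 \<or> b = 1" using h(5,6) by auto
    then show "a = b" using h(1-4) by (auto simp: even_diff_nat)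
  qed
  ultimately show ?thesis using assms(3-5) by metis
qed


lemma chain:
  "finite F \<Longrightarrow> gflag F \<Longrightarrow> gflag F' \<Longrightarrow> dim ` F = dim ` F' \<Longrightarrow>
   \<exists>h. lin h \<and> inj_on h (span (\<Union>F)) \<and> isom h (span (\<Union>F)) \<and> (\<forall>X\<in>F. h ` X \<in> F' \<and> dim (h ` X) = dim X)"
proof (induction "card F" arbitrary: F F' rule: less_induct)
  case less
  note fin = less.prems(1) and gf = less.prems(2) and gf' = less.prems(3) and dd = less.prems(4)
  show ?case
  proof (cases "F = {}")
    case True
    have "lin id" by (simp add: Vector_Spaces.linear_iff vs)
    then show ?thesis using True unfolding isom_def by auto
  next
    case False
    define m where "m = Max (dim ` F)"
    have fin0: "finite (dim ` F)" using fin by simp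
    have "m \<in> dim ` F" unfolding m_def using Max_in[OF fin0] False by simp
    then obtain M where M: "M \<in> F" "dim M = m" by blast
    have le: "dim X \<le> m" if "X \<in> F" for X using Max_ge[OF fin0] that unfolding m_def by simp
    have mx: "\<forall>X\<in>F - {M}. dim X < dim M"
    proof
      fix X assume X: "X \<in> F - {M}"
      have "dim X \<noteq> dim M" using gflag_dim_inj[OF gf _ M(1)] X by blast
      then show "dim X < dim M" using le X M(2) by fastforce
    qed
    have "m \<in> dim ` F'" using dd \<open>m \<in> dim ` F\<close> by simp
    then obtain M' where M': "M' \<in> F'" "dim M' = m" by blast
    have fin': "finite F'"
    proof -
      have "inj_on dim F'" using gflag_dim_inj[OF gf'] unfolding inj_on_def by blast
      moreover have "finite (dim ` F')" using dd fin0 by simp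
      ultimately show ?thesis using finite_imageD by blast
    qed
    have mx': "\<forall>X\<in>F' - {M'}. dim X < dim M'"
    proof
      fix X assume X: "X \<in> F' - {M'}"
      have "dim X \<in> dim ` F" using dd X by auto
      then have "dim X \<le> m" using le by auto
      moreover have "dim X \<noteq> dim M'" using gflag_dim_inj[OF gf' _ M'(1)] X by blast
      ultimately show "dim X < dim M'" using M'(2) by simp
    qed
    define F0 where "F0 = F - {M}"
    define F0' where "F0' = F' - {M'}"
    have gf0: "gflag F0" and gf0': "gflag F0'" unfolding F0_def F0'_def
      using gflag_subset gf gf' by blast+
    have dd0: "dim ` F0 = dim ` F0'"
    proof -
      have "dim ` F0 = dim ` F - {m}"
        unfolding F0_def using gflag_dim_inj[OF gf _ M(1)] M(2) by auto
      moreover have "dim ` F0' = dim ` F' - {m}"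
        unfolding F0'_def using gflag_dim_inj[OF gf' _ M'(1)] M'(2) by auto
      ultimately show ?thesis using dd by simp
    qed
    have "card F0 < card F" unfolding F0_def using M(1) fin by (meson card_Diff1_less)
    then obtain h0 where h0: "lin h0" "inj_on h0 (span (\<Union>F0))" "isom h0 (span (\<Union>F0))"
      "\<forall>X\<in>F0. h0 ` X \<in> F0' \<and> dim (h0 ` X) = dim X"
      using less.hyps[OF _ _ gf0 gf0' dd0] fin unfolding F0_def by blast
    note top = top_lemma[OF gf fin M(1) mx, folded F0_def]
    note top' = top_lemma[OF gf' fin' M'(1) mx', folded F0'_def]
    define U where "U = span (\<Union>F0)"
    define U' where "U' = h0 ` U"
    interpret lh0: Vector_Spaces.linear scale scale h0 by (fact h0(1))
    have U'span: "U' = span (h0 ` \<Union>F0)" unfolding U'_def U_def using lh0.span_image by simp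
    have U'sub: "U' \<subseteq> span (\<Union>F0')"
      unfolding U'span using h0(4) by (intro span_mono) blast
    have sM: "subspace M" and sM': "subspace M'" and rM: "dim (Rad s M) \<le> 1"
      and rM': "dim (Rad s M') \<le> 1"
      using gf gf' M(1) M'(1) unfolding gflag_def by auto
    have "good M M' U U' h0"
      unfolding good_def
    proof (intro conjI)
      show "subspace M" "subspace M'" by (fact sM) (fact sM')
      show "subspace U" "subspace U'" unfolding U_def U'span by simp_all
      show "U \<subseteq> M" using top(1) unfolding U_def .
      show "U' \<subseteq> M'" using top'(1) U'sub by blast
      show "dim M = dim M'" using M(2) M'(2) by simp
      show "dim (Rad s M) = dim (Rad s M')"
        using rad_dims_equal[OF sM sM' _ rM rM'] M(2) M'(2) by simp
      show "U \<inter> Rad s M = {0}" using top(2) unfolding U_def .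
      show "U' \<inter> Rad s M' = {0}"
        using top'(2) U'sub sub_0[OF Rad_subspace[OF sM']] span_zero[of "h0 ` \<Union>F0"]
        unfolding U'span by blast
      show "lin h0" by (fact h0(1))
      show "h0 ` U = U'" unfolding U'_def ..
      show "inj_on h0 U" unfolding U_def by (fact h0(2))
      show "isom h0 U" unfolding U_def by (fact h0(3))
    qed
    then obtain h where h: "extends M M' U h0 h" using ext_main by blast
    then have lh: "lin h" and hM: "h ` M = M'" and ih: "inj_on h M" and sh: "isom h M"
      and hh0: "\<forall>x\<in>U. h x = h0 x"
      unfolding extends_def by blast+
    have spanF: "span (\<Union>F) = M"
    proof
      have "\<Union>F \<subseteq> M"
      proof
        fix x assume "x \<in> \<Union>F"
        then obtain X where X: "X \<in> F" "x \<in> X" by blast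
        show "x \<in> M"
        proof (cases "X = M")
          case False
          then have "X \<subseteq> \<Union>F0" unfolding F0_def using X(1) by blast
          then have "X \<subseteq> U" unfolding U_def using span_superset[of "\<Union>F0"] by (rule order_trans)
          then show ?thesis using X(2) top(1) unfolding U_def by blast
        qed (use X in simp)
      qed
      then show "span (\<Union>F) \<subseteq> M" using sM by (intro span_minimal)
      have "M \<subseteq> \<Union>F" using M(1) by blast
      then show "M \<subseteq> span (\<Union>F)" using span_superset[of "\<Union>F"] by (rule order_trans)
    qed
    have "\<forall>X\<in>F. h ` X \<in> F' \<and> dim (h ` X) = dim X"
    proof
      fix X assume X: "X \<in> F"
      show "h ` X \<in> F' \<and> dim (h ` X) = dim X"
      proof (cases "X = M")
        case True
        then show ?thesis using hM M M' by simp
      next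
        case False
        then have XF0: "X \<in> F0" unfolding F0_def using X by simp
        then have "X \<subseteq> \<Union>F0" by blast
        then have "X \<subseteq> U" unfolding U_def using span_superset[of "\<Union>F0"] by (rule order_trans)
        then have "h ` X = h0 ` X" using hh0 by (intro image_cong[OF refl]) blast
        then show ?thesis using h0(4) XF0 unfolding F0'_def by auto
      qed
    qed
    then show ?thesis using lh ih sh spanF by auto
  qed
qed

end

theorem lemma5p1:
  fixes scale :: "'a::field \<Rightarrow> 'v::ab_group_add \<Rightarrow> 'v"
    and B :: "'v set" and s :: "'v \<Rightarrow> 'v \<Rightarrow> 'a" and n :: nat
  assumes "finite_dimensional_vector_space scale B"
    and "vector_space.dim scale (UNIV::'v set) = n"
    and "bilinear_form scale s"
    and "alternating s"
    and "maximal_rank scale s"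
  shows "flag_transitive scale s (Sp scale s)"
proof -
  interpret S: symp scale B s
    using assms(1,3,4) by (intro symp.intro symp_axioms.intro) auto
  note dimn = assms(2)
  have obj: "S.subspace X \<and> S.dim (Rad s X) \<le> 1 \<and> X \<inter> Rad s UNIV = {0} \<and> 1 \<le> S.dim X \<and> S.dim X \<le> n - 1"
    if "X \<in> objects scale s" for X
    using that dimn unfolding objects_def is_object_def by auto
  have key: "\<exists>g\<in>Sp scale s. (\<lambda>U. g ` U) ` F1 = F2"
    if F1: "is_flag scale s F1" and F2: "is_flag scale s F2"
      and ty: "flag_type scale F1 = flag_type scale F2" for F1 F2
  proof -
    define G1 where "G1 = insert UNIV F1"
    define G2 where "G2 = insert UNIV F2"
    have gf: "S.gflag (insert UNIV F)" if F: "is_flag scale s F" for F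
    proof -
      have A: "\<forall>X\<in>insert UNIV F. S.subspace X \<and> S.dim (Rad s X) \<le> 1"
        using obj F assms(5) unfolding is_flag_def maximal_rank_def by auto
      have "\<forall>X\<in>insert UNIV F. \<forall>Y\<in>insert UNIV F. incident s X Y"
      proof (intro ballI)
      fix X Y assume X: "X \<in> insert UNIV F" and Y: "Y \<in> insert UNIV F"
      show "incident s X Y"
      proof (cases "X = UNIV")
        case True
        then show ?thesis using Y obj F unfolding is_flag_def incident_def by auto
      next
        case False
        then show ?thesis
        proof (cases "Y = UNIV")
          case True
          then show ?thesis using X obj F unfolding is_flag_def incident_def by auto
        next
          case False
          then show ?thesis using X Y \<open>X \<noteq> UNIV\<close> F unfolding is_flag_def by auto
        qed
      qed
      qed
      then show ?thesis using A unfolding S.gflag_def by blast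
    qed
    have gf1: "S.gflag G1" and gf2: "S.gflag G2" unfolding G1_def G2_def using gf F1 F2 by auto
    have fin: "finite G1"
    proof -
      have "inj_on S.dim G1" using S.gflag_dim_inj[OF gf1] unfolding inj_on_def by blast
      moreover have "S.dim ` G1 \<subseteq> {0..n}" using dimn S.dim_subset[of _ UNIV] by auto
      ultimately show ?thesis using finite_imageD finite_subset by blast
    qed
    have ty': "S.dim ` G1 = S.dim ` G2"
      using ty unfolding G1_def G2_def flag_type_def obj_type_def by simp
    obtain h where h: "S.lin h" "inj_on h (S.span (\<Union>G1))" "S.isom h (S.span (\<Union>G1))"
      "\<forall>X\<in>G1. h ` X \<in> G2 \<and> S.dim (h ` X) = S.dim X"
      using S.chain[OF fin gf1 gf2 ty'] by blast
    have spU: "S.span (\<Union>G1) = UNIV" unfolding G1_def by auto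
    have hU: "h ` UNIV = UNIV"
      using S.gflag_dim_inj[OF gf2, of "h ` UNIV" UNIV] h(4) unfolding G1_def G2_def by auto
    have "h \<in> Sp scale s"
      unfolding Sp_def using h(1) h(2) h(3) hU spU unfolding S.isom_def
      by (auto simp: bij_def)
    moreover have "(\<lambda>U. h ` U) ` F1 = F2"
    proof
      show "(\<lambda>U. h ` U) ` F1 \<subseteq> F2"
      proof
        fix Y assume "Y \<in> (\<lambda>U. h ` U) ` F1"
        then obtain X where X: "X \<in> F1" "Y = h ` X" by blast
        have "Y \<in> G2" "S.dim Y = S.dim X" using h(4) X unfolding G1_def by auto
        moreover have "S.dim X \<le> n - 1" "1 \<le> S.dim X" using obj F1 X(1) unfolding is_flag_def by auto
        ultimately have "Y \<noteq> UNIV" using dimn by auto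
        then show "Y \<in> F2" using \<open>Y \<in> G2\<close> unfolding G2_def by simp
      qed
      show "F2 \<subseteq> (\<lambda>U. h ` U) ` F1"
      proof
        fix Y assume Y: "Y \<in> F2"
        have "S.dim Y \<in> S.dim ` F1"
          using ty Y unfolding flag_type_def obj_type_def by auto
        then obtain X where X: "X \<in> F1" "S.dim X = S.dim Y" by auto
        have "h ` X \<in> G2" "S.dim (h ` X) = S.dim X" using h(4) X unfolding G1_def by auto
        then have "h ` X = Y" using S.gflag_dim_inj[OF gf2, of "h ` X" Y] X(2) Y unfolding G2_def by auto
        then show "Y \<in> (\<lambda>U. h ` U) ` F1" using X(1) by blast
      qed
    qed
    ultimately show ?thesis by blast
  qed
  show ?thesis
    unfolding flag_transitive_def using key by blast
qed

end
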